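(* Let $\mathfrak g$ be an $8$-dimensional real nilpotent Lie algebra with a complex structure $J$ for which there is a basis $\{\omega^1,\omega^2,\omega^3,\omega^4\}$ of $(1,0)$-forms satisfying $d\omega^1=0$, $d\omega^2=\omega^{14}+\omega^{1\bar4}$, $d\omega^3=a\,\omega^{1\bar1}+\varepsilon(\omega^{12}+\omega^{1\bar2}-\omega^{2\bar1})+i\mu(\omega^{24}+\omega^{2\bar4})$, $d\omega^4=i\nu\,\omega^{1\bar1}-\mu\,\omega^{2\bar2}+ib(\omega^{1\bar2}-\omega^{2\bar1})+i(\omega^{1\bar3}-\omega^{3\bar1})$, with $\varepsilon=\mu=1$, $\nu=0$ and arbitrary $a,b\in\mathbb R$. Then $E_2^{0,2}(\mathfrak g,J)\neq E_3^{0,2}(\mathfrak g,J)$. More precisely, $E_1^{0,2}(\mathfrak g,J)=E_2^{0,2}(\mathfrak g,J)=\langle[i\,\omega^{\bar1\bar2}-\omega^{\bar2\bar4}],[\omega^{\bar1\bar3}-i\,\omega^{\bar3\bar4}]\rangle$ and $E_r^{0,2}(\mathfrak g,J)=\langle[i\,\omega^{\bar1\bar2}-\omega^{\bar2\bar4}]\rangle$ for every $r\ge3$.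
   Context: Notation: $\omega^{jk}=\omega^j\wedge\omega^k$, $\omega^{j\bar k}=\omega^j\wedge\overline{\omega^k}$, $\omega^{\bar j\bar k}=\overline{\omega^j}\wedge\overline{\omega^k}$. For a Lie algebra $\mathfrak g$ with integrable complex structure $J$, $E_r^{p,q}(\mathfrak g,J)$ is the $r$-th page in bidegree $(p,q)$ of the Frölicher spectral sequence of the double complex $(\Lambda^{*,*}(\mathfrak g,J),\partial,\bar\partial)$ of (complex) forms on $\mathfrak g$ of bidegree $(p,q)$ with respect to $J$, where $d=\partial+\bar\partial$ is the Chevalley–Eilenberg differential; $E_1^{p,q}$ is the $\bar\partial$-cohomology and $d_r$ has bidegree $(r,1-r)$. *)

theory Defs
  imports Complex_Main "HOL-Library.Function_Algebras"
begin

text \<open>Complex forms on the 8-dimensional real Lie algebra g, i.e. elements of the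
exterior algebra on the complex coframe
omega^1,...,omega^4, conj omega^1,...,conj omega^4.
Generator index j in 0..3 stands for omega^(j+1), index j in 4..7 for conj omega^(j-3).
A form is given by its coefficients: the coefficient at a set S = {s1 < ... < sk}
of generator indices is the coefficient of e_s1 wedge ... wedge e_sk.\<close>

type_synonym form = "nat set \<Rightarrow> complex"

definition gens :: "nat set" where "gens = {0..<8}"

definition pdeg :: "nat set \<Rightarrow> int" where "pdeg S = int (card (S \<inter> {0..<4}))"
definition qdeg :: "nat set \<Rightarrow> int" where "qdeg S = int (card (S \<inter> {4..<8}))"

definition bideg :: "int \<Rightarrow> int \<Rightarrow> form \<Rightarrow> bool" where
  "bideg p q \<alpha> \<longleftrightarrow> (\<forall>S. \<alpha> S \<noteq> 0 \<longrightarrow> S \<subseteq> gens \<and> pdeg S = p \<and> qdeg S = q)"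

definition smult :: "complex \<Rightarrow> form \<Rightarrow> form" where
  "smult c \<alpha> = (\<lambda>S. c * \<alpha> S)"

definition basis :: "nat set \<Rightarrow> form" where
  "basis S = (\<lambda>T. if T = S then 1 else 0)"

definition e :: "nat \<Rightarrow> form" where "e j = basis {j}"

definition inv_count :: "nat set \<Rightarrow> nat set \<Rightarrow> nat" where
  "inv_count A B = card {(a, b). a \<in> A \<and> b \<in> B \<and> b < a}"

definition wedge :: "form \<Rightarrow> form \<Rightarrow> form" where
  "wedge \<alpha> \<beta> = (\<lambda>S. if S \<subseteq> gens
      then (\<Sum>A\<in>Pow S. (-1) ^ inv_count A (S - A) * \<alpha> A * \<beta> (S - A)) else 0)"

definition sigma :: "nat \<Rightarrow> nat" where
  "sigma j = (if j < 4 then j + 4 else if j < 8 then j - 4 else j)"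

definition conjf :: "form \<Rightarrow> form" where
  "conjf \<alpha> = (\<lambda>T. if T \<subseteq> gens then
      (-1) ^ card {(a, b). a \<in> T \<and> b \<in> T \<and> a < b \<and> sigma b < sigma a} * cnj (\<alpha> (sigma ` T))
    else 0)"

definition w :: "nat \<Rightarrow> form" where "w k = e (k - 1)"
definition wb :: "nat \<Rightarrow> form" where "wb k = e (k + 3)"

definition dw :: "real \<Rightarrow> real \<Rightarrow> real \<Rightarrow> real \<Rightarrow> real \<Rightarrow> nat \<Rightarrow> form" where
  "dw \<epsilon> \<mu> \<nu> a b k =
    (if k = 1 then 0
     else if k = 2 then wedge (w 1) (w 4) + wedge (w 1) (wb 4)
     else if k = 3 then
        smult (of_real a) (wedge (w 1) (wb 1))
      + smult (of_real \<epsilon>) (wedge (w 1) (w 2) + wedge (w 1) (wb 2) - wedge (w 2) (wb 1))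
      + smult (\<i> * of_real \<mu>) (wedge (w 2) (w 4) + wedge (w 2) (wb 4))
     else if k = 4 then
        smult (\<i> * of_real \<nu>) (wedge (w 1) (wb 1))
      - smult (of_real \<mu>) (wedge (w 2) (wb 2))
      + smult (\<i> * of_real b) (wedge (w 1) (wb 2) - wedge (w 2) (wb 1))
      + smult \<i> (wedge (w 1) (wb 3) - wedge (w 3) (wb 1))
     else 0)"

text \<open>d of the generator with index j (d conj omega = conj d omega)\<close>
definition dgen :: "real \<Rightarrow> real \<Rightarrow> real \<Rightarrow> real \<Rightarrow> real \<Rightarrow> nat \<Rightarrow> form" where
  "dgen \<epsilon> \<mu> \<nu> a b j =
    (if j < 4 then dw \<epsilon> \<mu> \<nu> a b (j + 1)
     else if j < 8 then conjf (dw \<epsilon> \<mu> \<nu> a b (j - 3)) else 0)"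

text \<open>d extended as an antiderivation:
  d(e_s1 ... e_sk) = sum_i (-1)^(i-1) e_s1 ... d e_si ... e_sk
                   = sum_i (-1)^(i-1) (d e_si) wedge e_(S - {si})  (d e_si has even degree)\<close>
definition dbasis :: "real \<Rightarrow> real \<Rightarrow> real \<Rightarrow> real \<Rightarrow> real \<Rightarrow> nat set \<Rightarrow> form" where
  "dbasis \<epsilon> \<mu> \<nu> a b S =
    (\<Sum>j\<in>S. smult ((-1) ^ card {s\<in>S. s < j}) (wedge (dgen \<epsilon> \<mu> \<nu> a b j) (basis (S - {j}))))"

definition dform :: "real \<Rightarrow> real \<Rightarrow> real \<Rightarrow> real \<Rightarrow> real \<Rightarrow> form \<Rightarrow> form" where
  "dform \<epsilon> \<mu> \<nu> a b \<alpha> = (\<lambda>T. \<Sum>S\<in>Pow gens. \<alpha> S * dbasis \<epsilon> \<mu> \<nu> a b S T)"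

definition del :: "real \<Rightarrow> real \<Rightarrow> real \<Rightarrow> real \<Rightarrow> real \<Rightarrow> form \<Rightarrow> form" where
  "del \<epsilon> \<mu> \<nu> a b \<alpha> = (\<lambda>T. \<Sum>S\<in>Pow gens.
      if pdeg T = pdeg S + 1 \<and> qdeg T = qdeg S then \<alpha> S * dbasis \<epsilon> \<mu> \<nu> a b S T else 0)"

definition dbar :: "real \<Rightarrow> real \<Rightarrow> real \<Rightarrow> real \<Rightarrow> real \<Rightarrow> form \<Rightarrow> form" where
  "dbar \<epsilon> \<mu> \<nu> a b \<alpha> = (\<lambda>T. \<Sum>S\<in>Pow gens.
      if pdeg T = pdeg S \<and> qdeg T = qdeg S + 1 then \<alpha> S * dbasis \<epsilon> \<mu> \<nu> a b S T else 0)"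

text \<open>Frolicher spectral sequence of the double complex (A, dl, db):
  E_r^{p,q} = Z_r^{p,q} / B_r^{p,q} (r >= 1), with the standard zig-zag description.\<close>
definition Zr :: "(form \<Rightarrow> form) \<Rightarrow> (form \<Rightarrow> form) \<Rightarrow> nat \<Rightarrow> int \<Rightarrow> int \<Rightarrow> form set" where
  "Zr dl db r p q = {x. bideg p q x \<and> db x = 0 \<and>
     (\<exists>y :: nat \<Rightarrow> form. y 0 = x \<and>
        (\<forall>i\<in>{1..<r}. bideg (p + int i) (q - int i) (y i) \<and> dl (y (i - 1)) + db (y i) = 0))}"

definition Br :: "(form \<Rightarrow> form) \<Rightarrow> (form \<Rightarrow> form) \<Rightarrow> nat \<Rightarrow> int \<Rightarrow> int \<Rightarrow> form set" where
  "Br dl db r p q = {x. bideg p q x \<and>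
     (\<exists>y :: nat \<Rightarrow> form. bideg p (q - 1) (y 0) \<and>
        (\<forall>i\<in>{1..<r}. bideg (p - int i) (q + int i - 1) (y i)) \<and>
        (\<forall>i\<ge>r. y i = 0) \<and>
        x = db (y 0) + dl (y 1) \<and>
        (\<forall>i\<in>{1..<r}. db (y i) + dl (y (i + 1)) = 0))}"

definition lincomb :: "complex list \<Rightarrow> form list \<Rightarrow> form" where
  "lincomb cs vs = (\<Sum>i<length vs. smult (cs ! i) (vs ! i))"

definition classes_basis :: "form set \<Rightarrow> form set \<Rightarrow> form list \<Rightarrow> bool" where
  "classes_basis Z B vs \<longleftrightarrow> set vs \<subseteq> Z
     \<and> (\<forall>cs. length cs = length vs \<longrightarrow> lincomb cs vs \<in> B \<longrightarrow> (\<forall>c\<in>set cs. c = 0))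
     \<and> (\<forall>x\<in>Z. \<exists>cs. length cs = length vs \<and> x - lincomb cs vs \<in> B)"

definition Z_page where "Z_page \<epsilon> \<mu> \<nu> a b r p q = Zr (del \<epsilon> \<mu> \<nu> a b) (dbar \<epsilon> \<mu> \<nu> a b) r p q"
definition B_page where "B_page \<epsilon> \<mu> \<nu> a b r p q = Br (del \<epsilon> \<mu> \<nu> a b) (dbar \<epsilon> \<mu> \<nu> a b) r p q"

end

theory Submission
  imports Defs
begin


lemma sum_fun_apply: "(\<Sum>j\<in>S. f j) x = (\<Sum>j\<in>S. f j x)"
  by (induction S rule: infinite_finite_induct) auto

lemma smult_apply[simp]: "smult c f S = c * f S" by (simp add: smult_def)

lemma basis_eval: "basis S U = (if S \<subseteq> U \<and> U \<subseteq> S then 1 else 0)"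
  by (auto simp: basis_def)

lemma card_filter_sum: "finite B \<Longrightarrow> card {b\<in>B. P b} = (\<Sum>b\<in>B. if P b then 1 else 0)"
  by (simp add: sum.inter_filter[symmetric])

lemma pair_card_sum:
  assumes "finite A" "finite B"
  shows "card {(a,b). a\<in>A \<and> b\<in>B \<and> P a b} = (\<Sum>a\<in>A. \<Sum>b\<in>B. if P a b then 1 else 0)"
proof -
  have "{(a,b). a\<in>A \<and> b\<in>B \<and> P a b} = Sigma A (\<lambda>a. {b\<in>B. P a b})" by auto
  then have "card {(a,b). a\<in>A \<and> b\<in>B \<and> P a b} = (\<Sum>a\<in>A. card {b\<in>B. P a b})"
    using assms by simp
  also have "\<dots> = (\<Sum>a\<in>A. \<Sum>b\<in>B. if P a b then 1 else 0)"
    using assms by (intro sum.cong refl card_filter_sum) 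
  finally show ?thesis .
qed

lemma inv_count_sum: "finite A \<Longrightarrow> finite B \<Longrightarrow>
   inv_count A B = (\<Sum>a\<in>A. \<Sum>b\<in>B. if b < a then 1 else 0)"
  unfolding inv_count_def by (rule pair_card_sum)

lemma wedge_basis_right:
  "wedge f (basis B) T = (if T \<subseteq> gens \<and> B \<subseteq> T then (-1) ^ inv_count (T - B) B * f (T - B) else 0)"
proof (cases "T \<subseteq> gens")
  case True
  have "(\<Sum>A\<in>Pow T. (-1) ^ inv_count A (T - A) * f A * basis B (T - A))
      = (\<Sum>A\<in>Pow T. if A = T - B then (if B \<subseteq> T then (-1) ^ inv_count A (T - A) * f A else 0) else 0)"
  proof (rule sum.cong)
    fix A assume "A \<in> Pow T"
    then have "A \<subseteq> T" by auto
    then have iff: "(T - A = B) \<longleftrightarrow> (A = T - B \<and> B \<subseteq> T)" by auto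
    show "(-1) ^ inv_count A (T - A) * f A * basis B (T - A) =
      (if A = T - B then (if B \<subseteq> T then (-1) ^ inv_count A (T - A) * f A else 0) else 0)"
    proof (cases "A = T - B \<and> B \<subseteq> T")
      case True
      then have "basis B (T - A) = 1" using iff by (simp add: basis_def)
      then show ?thesis using True by simp
    next
      case False
      then have "basis B (T - A) = 0" using iff by (simp add: basis_def)
      then show ?thesis using False by auto
    qed
  qed simp
  also have "\<dots> = (if B \<subseteq> T then (-1) ^ inv_count (T - B) (T - (T - B)) * f (T - B) else 0)"
  proof -
    have fin: "finite (Pow T)" using True finite_subset[of T "{0..<8}"] by (simp add: gens_def)
    show ?thesis by (simp add: sum.delta[OF fin])
  qed
  also have "\<dots> = (if B \<subseteq> T then (-1) ^ inv_count (T - B) B * f (T - B) else 0)"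
  proof (cases "B \<subseteq> T")
    case True
    then have "T - (T - B) = B" by auto
    then show ?thesis by simp
  qed simp
  finally show ?thesis using True by (simp add: wedge_def)
qed (simp add: wedge_def)

lemma wedge_basis:
  "wedge (basis A) (basis B) = (if A \<inter> B = {} \<and> A \<union> B \<subseteq> gens then smult ((-1) ^ inv_count A B) (basis (A \<union> B)) else 0)"
proof (rule ext)
  fix T
  show "wedge (basis A) (basis B) T = (if A \<inter> B = {} \<and> A \<union> B \<subseteq> gens then smult ((-1) ^ inv_count A B) (basis (A \<union> B)) else 0) T"
  proof (cases "T \<subseteq> gens \<and> B \<subseteq> T \<and> T - B = A")
    case True
    then have d: "A \<inter> B = {}" and t: "A \<union> B = T" by auto
    have "wedge (basis A) (basis B) T = (-1) ^ inv_count (T - B) B * basis A (T - B)"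
      using True by (simp add: wedge_basis_right)
    also have "\<dots> = (-1) ^ inv_count A B" using True by (simp add: basis_def)
    finally have l: "wedge (basis A) (basis B) T = (-1) ^ inv_count A B" .
    have "basis (A \<union> B) T = 1" using t by (simp add: basis_def)
    then show ?thesis using l d t True by simp
  next
    case False
    then have "\<not> (A \<inter> B = {} \<and> A \<union> B \<subseteq> gens \<and> T = A \<union> B)" by auto
    have l: "wedge (basis A) (basis B) T = 0"
    proof (cases "T \<subseteq> gens \<and> B \<subseteq> T")
      case True
      then have "T - B \<noteq> A" using False by blast
      then have "basis A (T - B) = 0" by (simp add: basis_def)
      then show ?thesis by (simp add: wedge_basis_right)
    next
      case False
      then show ?thesis by (auto simp add: wedge_basis_right)
    qed
    have r: "(if A \<inter> B = {} \<and> A \<union> B \<subseteq> gens then smult ((-1) ^ inv_count A B) (basis (A \<union> B)) else 0) T = 0"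
    proof (cases "A \<inter> B = {} \<and> A \<union> B \<subseteq> gens")
      case True
      then have "T \<noteq> A \<union> B" using \<open>\<not> (A \<inter> B = {} \<and> A \<union> B \<subseteq> gens \<and> T = A \<union> B)\<close> by blast
      then have "basis (A \<union> B) T = 0" by (simp add: basis_def)
      then show ?thesis using True by simp
    qed auto
    show ?thesis using l r by simp
  qed
qed

lemma sigma_sigma[simp]: "sigma (sigma j) = j" by (cases "j<4"; cases "j<8"; simp add: sigma_def)
lemma sigma_inj: "inj sigma" by (metis injI sigma_sigma)
lemma sigma_image_image[simp]: "sigma ` sigma ` S = S" by (simp add: image_image)
lemma sigma_lt: "sigma j < 8 \<longleftrightarrow> j < 8" by (auto simp: sigma_def)
lemma sigma_gens: "sigma ` T \<subseteq> gens \<longleftrightarrow> T \<subseteq> gens"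
  unfolding gens_def by (auto simp: sigma_lt)

lemma conjf_basis: "conjf (basis S) = (if sigma ` S \<subseteq> gens then
   smult ((-1) ^ card {(a, b). a \<in> sigma ` S \<and> b \<in> sigma ` S \<and> a < b \<and> sigma b < sigma a}) (basis (sigma ` S)) else 0)"
  (is "_ = ?R")
proof (rule ext)
  fix T
  have eq: "(sigma ` T = S) \<longleftrightarrow> (T = sigma ` S)" by (metis sigma_image_image)
  have c: "conjf (basis S) T = (if T \<subseteq> gens then
      (-1) ^ card {(a, b). a \<in> T \<and> b \<in> T \<and> a < b \<and> sigma b < sigma a} * cnj (basis S (sigma ` T)) else 0)"
    by (simp only: conjf_def)
  show "conjf (basis S) T = ?R T"
  proof (cases "T = sigma ` S")
    case True
    have "sigma ` T = S" using True eq by simp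
    then have b1: "basis S (sigma ` T) = 1" by (simp add: basis_def)
    have b2: "basis (sigma ` S) T = 1" using True by (simp add: basis_def)
    show ?thesis unfolding c b1 using b2 True by simp
  next
    case False
    then have "sigma ` T \<noteq> S" using eq by simp
    then have b1: "basis S (sigma ` T) = 0" by (simp add: basis_def)
    have b2: "basis (sigma ` S) T = 0" using False by (simp add: basis_def)
    show ?thesis unfolding c b1 using b2 by simp
  qed
qed

lemma conjf_add: "conjf (f + g) = conjf f + conjf g"
  by (rule ext) (simp add: conjf_def distrib_left)
lemma conjf_diff: "conjf (f - g) = conjf f - conjf g"
  by (rule ext) (simp add: conjf_def right_diff_distrib)
lemma conjf_smult: "conjf (smult c f) = smult (cnj c) (conjf f)"
  by (rule ext) (simp add: conjf_def)
lemma conjf_zero: "conjf 0 = 0"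
  by (rule ext) (simp add: conjf_def)
lemma smult_zero: "smult c 0 = 0" by (rule ext) simp

lemmas dgen_simps = dgen_def dw_def w_def wb_def e_def wedge_basis conjf_basis conjf_add conjf_diff conjf_smult
   conjf_zero smult_zero inv_count_sum pair_card_sum gens_def sigma_def


lemma conjf_basis_sum: "conjf (basis S) = (if sigma ` S \<subseteq> gens then
   smult ((-1) ^ (\<Sum>a\<in>sigma ` S. \<Sum>b\<in>sigma ` S. if a < b \<and> sigma b < sigma a then 1 else 0)) (basis (sigma ` S)) else 0)"
proof (cases "sigma ` S \<subseteq> gens")
  case True
  then have "finite (sigma ` S)" using finite_subset[of _ "{0..<8}"] by (auto simp: gens_def)
  then show ?thesis using True by (simp add: conjf_basis pair_card_sum)
qed (simp add: conjf_basis)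

lemmas dgs = dgen_def dw_def w_def wb_def e_def wedge_basis conjf_add conjf_diff conjf_smult conjf_zero smult_zero
    inv_count_sum gens_def conjf_basis_sum sigma_def


lemma dbasis_eval: "finite S \<Longrightarrow> dbasis \<epsilon> \<mu> \<nu> a b S T = (\<Sum>j\<in>S. (-1)^(\<Sum>s\<in>S. if s<j then 1 else 0) *
   (if T \<subseteq> gens \<and> S - {j} \<subseteq> T then (-1)^(\<Sum>x\<in>T - (S-{j}). \<Sum>y\<in>S-{j}. if y < x then 1 else 0)
     * dgen \<epsilon> \<mu> \<nu> a b j (T - (S - {j})) else 0))"
proof -
  assume fS: "finite S"
  have "dbasis \<epsilon> \<mu> \<nu> a b S T = (\<Sum>j\<in>S. (-1)^card{s\<in>S. s<j} *
   (if T \<subseteq> gens \<and> S - {j} \<subseteq> T then (-1)^inv_count (T - (S-{j})) (S-{j}) * dgen \<epsilon> \<mu> \<nu> a b j (T - (S - {j})) else 0))"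
    by (simp add: dbasis_def sum_fun_apply wedge_basis_right)
  also have "\<dots> = (\<Sum>j\<in>S. (-1)^(\<Sum>s\<in>S. if s<j then 1 else 0) *
   (if T \<subseteq> gens \<and> S - {j} \<subseteq> T then (-1)^(\<Sum>x\<in>T - (S-{j}). \<Sum>y\<in>S-{j}. if y < x then 1 else 0)
     * dgen \<epsilon> \<mu> \<nu> a b j (T - (S - {j})) else 0))"
  proof (rule sum.cong[OF refl])
    fix j assume "j \<in> S"
    show "(-1)^card{s\<in>S. s<j} *
   (if T \<subseteq> gens \<and> S - {j} \<subseteq> T then (-1)^inv_count (T - (S-{j})) (S-{j}) * dgen \<epsilon> \<mu> \<nu> a b j (T - (S - {j})) else 0)
     = (-1)^(\<Sum>s\<in>S. if s<j then 1 else 0) *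
   (if T \<subseteq> gens \<and> S - {j} \<subseteq> T then (-1)^(\<Sum>x\<in>T - (S-{j}). \<Sum>y\<in>S-{j}. if y < x then 1 else 0)
     * dgen \<epsilon> \<mu> \<nu> a b j (T - (S - {j})) else 0)"
    proof (cases "T \<subseteq> gens")
      case True
      then have "finite T" using finite_subset[of T "{0..<8}"] by (simp add: gens_def)
      then show ?thesis using fS by (simp add: card_filter_sum inv_count_sum)
    qed (simp add: card_filter_sum fS)
  qed
  finally show ?thesis .
qed

lemma dbasis_gens: "\<not> T \<subseteq> gens \<Longrightarrow> dbasis \<epsilon> \<mu> \<nu> a b S T = 0"
  by (simp add: dbasis_def sum_fun_apply wedge_basis_right)

lemma pdeg_nonneg: "pdeg S \<ge> 0" by (simp add: pdeg_def)
lemma qdeg_nonneg: "qdeg S \<ge> 0" by (simp add: qdeg_def)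

lemma bideg_zero[simp]: "bideg p q 0" by (simp add: bideg_def)
lemma bideg_negq: "q < 0 \<Longrightarrow> bideg p q f \<Longrightarrow> f = 0"
  unfolding bideg_def by (rule ext) (metis qdeg_nonneg not_le zero_fun_apply)
lemma bideg_negp: "p < 0 \<Longrightarrow> bideg p q f \<Longrightarrow> f = 0"
  unfolding bideg_def by (rule ext) (metis pdeg_nonneg not_le zero_fun_apply)
lemma bideg_add: "bideg p q f \<Longrightarrow> bideg p q g \<Longrightarrow> bideg p q (f + g)"
  unfolding bideg_def by (metis add.right_neutral plus_fun_apply)
lemma bideg_diff: "bideg p q f \<Longrightarrow> bideg p q g \<Longrightarrow> bideg p q (f - g)"
  unfolding bideg_def by (metis diff_zero minus_apply)
lemma bideg_smult: "bideg p q f \<Longrightarrow> bideg p q (smult c f)"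
  unfolding bideg_def by simp
lemma bideg_basis: "S \<subseteq> gens \<Longrightarrow> pdeg S = p \<Longrightarrow> qdeg S = q \<Longrightarrow> bideg p q (basis S)"
  unfolding bideg_def basis_def by simp

lemma del_alt: "del \<epsilon> \<mu> \<nu> a b f T = (\<Sum>S\<in>Pow gens. f S * (if pdeg T = pdeg S + 1 \<and> qdeg T = qdeg S then dbasis \<epsilon> \<mu> \<nu> a b S T else 0))"
  unfolding del_def by (rule sum.cong) auto
lemma dbar_alt: "dbar \<epsilon> \<mu> \<nu> a b f T = (\<Sum>S\<in>Pow gens. f S * (if pdeg T = pdeg S \<and> qdeg T = qdeg S + 1 then dbasis \<epsilon> \<mu> \<nu> a b S T else 0))"
  unfolding dbar_def by (rule sum.cong) auto

lemma del_add: "del \<epsilon> \<mu> \<nu> a b (f + g) = del \<epsilon> \<mu> \<nu> a b f + del \<epsilon> \<mu> \<nu> a b g"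
  by (rule ext) (simp add: del_alt distrib_right sum.distrib)
lemma del_diff: "del \<epsilon> \<mu> \<nu> a b (f - g) = del \<epsilon> \<mu> \<nu> a b f - del \<epsilon> \<mu> \<nu> a b g"
  by (rule ext) (simp add: del_alt left_diff_distrib sum_subtractf)
lemma del_smult: "del \<epsilon> \<mu> \<nu> a b (smult c f) = smult c (del \<epsilon> \<mu> \<nu> a b f)"
  by (rule ext) (simp add: del_alt sum_distrib_left mult.assoc)
lemma del_zero: "del \<epsilon> \<mu> \<nu> a b 0 = 0"
  by (rule ext) (simp add: del_alt)
lemma dbar_add: "dbar \<epsilon> \<mu> \<nu> a b (f + g) = dbar \<epsilon> \<mu> \<nu> a b f + dbar \<epsilon> \<mu> \<nu> a b g"
  by (rule ext) (simp add: dbar_alt distrib_right sum.distrib)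
lemma dbar_diff: "dbar \<epsilon> \<mu> \<nu> a b (f - g) = dbar \<epsilon> \<mu> \<nu> a b f - dbar \<epsilon> \<mu> \<nu> a b g"
  by (rule ext) (simp add: dbar_alt left_diff_distrib sum_subtractf)
lemma dbar_smult: "dbar \<epsilon> \<mu> \<nu> a b (smult c f) = smult c (dbar \<epsilon> \<mu> \<nu> a b f)"
  by (rule ext) (simp add: dbar_alt sum_distrib_left mult.assoc)
lemma dbar_zero: "dbar \<epsilon> \<mu> \<nu> a b 0 = 0"
  by (rule ext) (simp add: dbar_alt)

lemma finite_Pow_gens: "finite (Pow gens)" by (simp add: gens_def)

lemma del_basis: "del \<epsilon> \<mu> \<nu> a b (basis S) T = (if S \<subseteq> gens \<and> pdeg T = pdeg S + 1 \<and> qdeg T = qdeg S then dbasis \<epsilon> \<mu> \<nu> a b S T else 0)"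
proof -
  have "del \<epsilon> \<mu> \<nu> a b (basis S) T = (\<Sum>S'\<in>Pow gens. if S' = S then (if pdeg T = pdeg S + 1 \<and> qdeg T = qdeg S then dbasis \<epsilon> \<mu> \<nu> a b S T else 0) else 0)"
    unfolding del_alt by (rule sum.cong) (auto simp: basis_def)
  then show ?thesis by (simp add: sum.delta'[OF finite_Pow_gens] sum.delta[OF finite_Pow_gens])
qed
lemma dbar_basis: "dbar \<epsilon> \<mu> \<nu> a b (basis S) T = (if S \<subseteq> gens \<and> pdeg T = pdeg S \<and> qdeg T = qdeg S + 1 then dbasis \<epsilon> \<mu> \<nu> a b S T else 0)"
proof -
  have "dbar \<epsilon> \<mu> \<nu> a b (basis S) T = (\<Sum>S'\<in>Pow gens. if S' = S then (if pdeg T = pdeg S \<and> qdeg T = qdeg S + 1 then dbasis \<epsilon> \<mu> \<nu> a b S T else 0) else 0)"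
    unfolding dbar_alt by (rule sum.cong) (auto simp: basis_def)
  then show ?thesis by (simp add: sum.delta'[OF finite_Pow_gens] sum.delta[OF finite_Pow_gens])
qed

lemma sum_nonzero_ex: "(\<Sum>S\<in>A. f S) \<noteq> (0::complex) \<Longrightarrow> \<exists>S\<in>A. f S \<noteq> 0"
  by (meson sum.neutral)

lemma bideg_del: "bideg p q x \<Longrightarrow> bideg (p + 1) q (del \<epsilon> \<mu> \<nu> a b x)"
  unfolding bideg_def
proof (intro allI impI)
  fix T assume bx: "\<forall>S. x S \<noteq> 0 \<longrightarrow> S \<subseteq> gens \<and> pdeg S = p \<and> qdeg S = q" and nz: "del \<epsilon> \<mu> \<nu> a b x T \<noteq> 0"
  from nz obtain S where "x S * (if pdeg T = pdeg S + 1 \<and> qdeg T = qdeg S then dbasis \<epsilon> \<mu> \<nu> a b S T else 0) \<noteq> 0"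
    unfolding del_alt using sum_nonzero_ex by blast
  then have "x S \<noteq> 0" "pdeg T = pdeg S + 1" "qdeg T = qdeg S" "dbasis \<epsilon> \<mu> \<nu> a b S T \<noteq> 0"
    by (auto split: if_splits)
  then show "T \<subseteq> gens \<and> pdeg T = p + 1 \<and> qdeg T = q" using bx dbasis_gens by metis
qed

lemma bideg_dbar: "bideg p q x \<Longrightarrow> bideg p (q + 1) (dbar \<epsilon> \<mu> \<nu> a b x)"
  unfolding bideg_def
proof (intro allI impI)
  fix T assume bx: "\<forall>S. x S \<noteq> 0 \<longrightarrow> S \<subseteq> gens \<and> pdeg S = p \<and> qdeg S = q" and nz: "dbar \<epsilon> \<mu> \<nu> a b x T \<noteq> 0"
  from nz obtain S where "x S * (if pdeg T = pdeg S \<and> qdeg T = qdeg S + 1 then dbasis \<epsilon> \<mu> \<nu> a b S T else 0) \<noteq> 0"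
    unfolding dbar_alt using sum_nonzero_ex by blast
  then have "x S \<noteq> 0" "pdeg T = pdeg S" "qdeg T = qdeg S + 1" "dbasis \<epsilon> \<mu> \<nu> a b S T \<noteq> 0"
    by (auto split: if_splits)
  then show "T \<subseteq> gens \<and> pdeg T = p \<and> qdeg T = q + 1" using bx dbasis_gens by metis
qed

definition completeL :: "nat set list \<Rightarrow> int \<Rightarrow> int \<Rightarrow> bool" where
  "completeL L p q \<longleftrightarrow> (\<forall>S. S \<subseteq> gens \<and> pdeg S = p \<and> qdeg S = q \<longrightarrow> S \<in> set L)"

lemma sum_restrict_list:
  assumes bx: "bideg p q x" and c: "completeL L p q" and d: "distinct L"
  shows "(\<Sum>S\<in>Pow gens. x S * K S) = sum_list (map (\<lambda>S. x S * K S) L)"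
proof -
  have fin: "finite (Pow gens \<union> set L)" by (simp add: gens_def)
  have "(\<Sum>S\<in>Pow gens. x S * K S) = (\<Sum>S\<in>Pow gens \<union> set L. x S * K S)"
  proof (rule sum.mono_neutral_left[OF fin])
    show "\<forall>S\<in>Pow gens \<union> set L - Pow gens. x S * K S = 0"
      using bx unfolding bideg_def by auto
  qed auto
  also have "\<dots> = (\<Sum>S\<in>set L. x S * K S)"
  proof (rule sum.mono_neutral_right[OF fin])
    show "\<forall>S\<in>Pow gens \<union> set L - set L. x S * K S = 0"
      using bx c unfolding bideg_def completeL_def by auto
  qed auto
  also have "\<dots> = sum_list (map (\<lambda>S. x S * K S) L)"
    using d by (simp add: sum.distinct_set_conv_list)
  finally show ?thesis .
qed

lemma del_expand: "bideg p q x \<Longrightarrow> completeL L p q \<Longrightarrow> distinct L \<Longrightarrow>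
  del \<epsilon> \<mu> \<nu> a b x T = sum_list (map (\<lambda>S. x S * (if pdeg T = pdeg S + 1 \<and> qdeg T = qdeg S then dbasis \<epsilon> \<mu> \<nu> a b S T else 0)) L)"
  unfolding del_alt by (rule sum_restrict_list)
lemma dbar_expand: "bideg p q x \<Longrightarrow> completeL L p q \<Longrightarrow> distinct L \<Longrightarrow>
  dbar \<epsilon> \<mu> \<nu> a b x T = sum_list (map (\<lambda>S. x S * (if pdeg T = pdeg S \<and> qdeg T = qdeg S + 1 then dbasis \<epsilon> \<mu> \<nu> a b S T else 0)) L)"
  unfolding dbar_alt by (rule sum_restrict_list)

lemma zero_check: "bideg p q f \<Longrightarrow> completeL L p q \<Longrightarrow> (\<forall>S\<in>set L. f S = 0) \<Longrightarrow> f = 0"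
  unfolding bideg_def completeL_def by (rule ext) (metis zero_fun_apply)

definition "lo0 = [{}::nat set]"
definition "lo1 = [{0::nat},{1},{2},{3}]"
definition "lo2 = [{0::nat,1},{0,2},{0,3},{1,2},{1,3},{2,3}]"
definition "hi0 = [{}::nat set]"
definition "hi1 = [{4::nat},{5},{6},{7}]"
definition "hi2 = [{4::nat,5},{4,6},{4,7},{5,6},{5,7},{6,7}]"
definition "hi3 = [{4::nat,5,6},{4,5,7},{4,6,7},{5,6,7}]"

definition prodL :: "nat set list \<Rightarrow> nat set list \<Rightarrow> nat set list" where
  "prodL X Y = concat (map (\<lambda>A. map (\<lambda>B. A \<union> B) Y) X)"

lemma lo_sets:
  assumes "A \<subseteq> {0..<4}"
  shows "card A = 0 \<Longrightarrow> A \<in> set lo0" "card A = 1 \<Longrightarrow> A \<in> set lo1" "card A = 2 \<Longrightarrow> A \<in> set lo2"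
proof -
  have fA: "finite A" using assms finite_subset by blast
  show "card A = 0 \<Longrightarrow> A \<in> set lo0" using fA by (simp add: lo0_def)
  show "card A = 1 \<Longrightarrow> A \<in> set lo1"
  proof -
    assume "card A = 1"
    then obtain x where "A = {x}" by (auto simp: card_Suc_eq)
    with assms show ?thesis by (auto simp: lo1_def)
  qed
  show "card A = 2 \<Longrightarrow> A \<in> set lo2"
  proof -
    assume "card A = 2"
    then obtain x y where xy: "A = {x,y}" "x \<noteq> y" by (auto simp: card_2_iff)
    with assms have "x < 4" "y < 4" by auto
    with xy show ?thesis by (auto simp: lo2_def insert_commute less_Suc_eq numeral_eq_Suc)
  qed
qed


lemma hi_sets:
  assumes "A \<subseteq> {4..<8}"
  shows "card A = 0 \<Longrightarrow> A \<in> set hi0" "card A = 1 \<Longrightarrow> A \<in> set hi1" "card A = 2 \<Longrightarrow> A \<in> set hi2"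
    "card A = 3 \<Longrightarrow> A \<in> set hi3"
proof -
  have fA: "finite A" using assms finite_subset by blast
  have r: "x \<in> A \<Longrightarrow> x = 4 \<or> x = 5 \<or> x = 6 \<or> x = 7" for x using assms by auto
  show "card A = 0 \<Longrightarrow> A \<in> set hi0" using fA by (simp add: hi0_def)
  show "card A = 1 \<Longrightarrow> A \<in> set hi1"
  proof -
    assume "card A = 1"
    then obtain x where "A = {x}" by (auto simp: card_Suc_eq)
    with r show ?thesis by (auto simp: hi1_def)
  qed
  show "card A = 2 \<Longrightarrow> A \<in> set hi2"
  proof -
    assume "card A = 2"
    then obtain x y where xy: "A = {x,y}" "x \<noteq> y" by (auto simp: card_2_iff)
    with r have "x = 4 \<or> x = 5 \<or> x = 6 \<or> x = 7" "y = 4 \<or> y = 5 \<or> y = 6 \<or> y = 7" by auto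
    with xy show ?thesis by (auto simp: hi2_def insert_commute)
  qed
  show "card A = 3 \<Longrightarrow> A \<in> set hi3"
  proof -
    assume "card A = 3"
    then obtain x y z where xy: "A = {x,y,z}" "x \<noteq> y" "y \<noteq> z" "x \<noteq> z" by (auto simp: card_3_iff)
    with r have "x = 4 \<or> x = 5 \<or> x = 6 \<or> x = 7" "y = 4 \<or> y = 5 \<or> y = 6 \<or> y = 7"
       "z = 4 \<or> z = 5 \<or> z = 6 \<or> z = 7" by auto
    with xy show ?thesis by (auto simp: hi3_def insert_commute)
  qed
qed

lemma complete_prodL:
  assumes X: "\<And>A. A \<subseteq> {0..<4} \<Longrightarrow> card A = nat p \<Longrightarrow> A \<in> set X"
    and Y: "\<And>B. B \<subseteq> {4..<8} \<Longrightarrow> card B = nat q \<Longrightarrow> B \<in> set Y"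
  shows "completeL (prodL X Y) p q"
  unfolding completeL_def
proof (intro allI impI)
  fix S assume S: "S \<subseteq> gens \<and> pdeg S = p \<and> qdeg S = q"
  define A where "A = S \<inter> {0..<4}"
  define B where "B = S \<inter> {4..<8}"
  have "S = A \<union> B" using S unfolding A_def B_def gens_def by auto
  moreover have "A \<in> set X" using S X[of A] unfolding A_def pdeg_def by auto
  moreover have "B \<in> set Y" using S Y[of B] unfolding B_def qdeg_def by auto
  ultimately show "S \<in> set (prodL X Y)" unfolding prodL_def by auto
qed

definition "L01 = prodL lo0 hi1"
definition "L02 = prodL lo0 hi2"
definition "L03 = prodL lo0 hi3"
definition "L11 = prodL lo1 hi1"
definition "L12 = prodL lo1 hi2"
definition "L20 = prodL lo2 hi0"
definition "L21 = prodL lo2 hi1"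

lemma complete_L01: "completeL L01 0 1" unfolding L01_def by (rule complete_prodL) (auto intro: lo_sets hi_sets)
lemma complete_L02: "completeL L02 0 2" unfolding L02_def by (rule complete_prodL) (auto intro: lo_sets hi_sets)
lemma complete_L03: "completeL L03 0 3" unfolding L03_def by (rule complete_prodL) (auto intro: lo_sets hi_sets)
lemma complete_L11: "completeL L11 1 1" unfolding L11_def by (rule complete_prodL) (auto intro: lo_sets hi_sets)
lemma complete_L12: "completeL L12 1 2" unfolding L12_def by (rule complete_prodL) (auto intro: lo_sets hi_sets)
lemma complete_L20: "completeL L20 2 0" unfolding L20_def by (rule complete_prodL) (auto intro: lo_sets hi_sets)
lemma complete_L21: "completeL L21 2 1" unfolding L21_def by (rule complete_prodL) (auto intro: lo_sets hi_sets)

definition setcode :: "nat set \<Rightarrow> nat" where "setcode S = (\<Sum>i\<in>S. 2 ^ i)"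

lemma distinct_code: "distinct (map setcode L) \<Longrightarrow> distinct L"
  by (simp add: distinct_map)

lemmas Ldefs = L01_def L02_def L03_def L11_def L12_def L20_def L21_def prodL_def lo0_def lo1_def lo2_def
  hi0_def hi1_def hi2_def hi3_def

lemma distinct_L01: "distinct L01" by (rule distinct_code) (simp add: Ldefs setcode_def)
lemma distinct_L02: "distinct L02" by (rule distinct_code) (simp add: Ldefs setcode_def)
lemma distinct_L11: "distinct L11" by (rule distinct_code) (simp add: Ldefs setcode_def)
lemma distinct_L20: "distinct L20" by (rule distinct_code) (simp add: Ldefs setcode_def)




schematic_goal dg0: "dgen 1 1 0 a b 0 = ?X" by (simp add: dgs)
schematic_goal dg1: "dgen 1 1 0 a b 1 = ?X" by (simp add: dgs)
schematic_goal dg2: "dgen 1 1 0 a b 2 = ?X" by (simp add: dgs)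
schematic_goal dg3: "dgen 1 1 0 a b 3 = ?X" by (simp add: dgs)
schematic_goal dg4: "dgen 1 1 0 a b 4 = ?X" by (simp add: dgs)
schematic_goal dg5: "dgen 1 1 0 a b 5 = ?X" by (simp add: dgs)
schematic_goal dg6: "dgen 1 1 0 a b 6 = ?X" by (simp add: dgs)
schematic_goal dg7: "dgen 1 1 0 a b 7 = ?X" by (simp add: dgs)
lemmas dgtab = dg0 dg1 dg2 dg3 dg4 dg5 dg6 dg7

lemmas evs = dbasis_eval dgtab basis_eval gens_def insert_Diff_if pdeg_def qdeg_def




definition alpha :: form where "alpha = smult \<i> (wedge (wb 1) (wb 2)) - wedge (wb 2) (wb 4)"
definition beta :: form where "beta = wedge (wb 1) (wb 3) - smult \<i> (wedge (wb 3) (wb 4))"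

schematic_goal alpha_form: "alpha = ?X" by (simp add: alpha_def wb_def e_def wedge_basis inv_count_sum gens_def)
schematic_goal beta_form: "beta = ?X" by (simp add: beta_def wb_def e_def wedge_basis inv_count_sum gens_def)

lemma bideg_alpha: "bideg 0 2 alpha"
  unfolding alpha_form by (intro bideg_diff bideg_smult bideg_basis) (simp_all add: gens_def pdeg_def qdeg_def)
lemma bideg_beta: "bideg 0 2 beta"
  unfolding beta_form by (intro bideg_diff bideg_smult bideg_basis) (simp_all add: gens_def pdeg_def qdeg_def)

lemmas exp02 = del_expand[OF _ complete_L02 distinct_L02] dbar_expand[OF _ complete_L02 distinct_L02]
lemmas exp01 = del_expand[OF _ complete_L01 distinct_L01] dbar_expand[OF _ complete_L01 distinct_L01]
lemmas exp11 = del_expand[OF _ complete_L11 distinct_L11] dbar_expand[OF _ complete_L11 distinct_L11]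
lemmas exp20 = del_expand[OF _ complete_L20 distinct_L20] dbar_expand[OF _ complete_L20 distinct_L20]

lemma dbar_z:
  assumes "bideg 0 1 z"
  shows "dbar 1 1 0 a b z {4,5} = z {6}" "dbar 1 1 0 a b z {4,6} = 0" "dbar 1 1 0 a b z {4,7} = z {5}"
    "dbar 1 1 0 a b z {5,6} = 0" "dbar 1 1 0 a b z {5,7} = - \<i> * z {6}" "dbar 1 1 0 a b z {6,7} = 0"
  using assms by (simp_all add: exp01 Ldefs evs)

lemma dbar_x:
  assumes "bideg 0 2 x"
  shows "dbar 1 1 0 a b x {4,5,7} = \<i> * x {4,6} + x {6,7}" "dbar 1 1 0 a b x {4,6,7} = - x {5,6}"
  using assms by (simp_all add: exp02 Ldefs evs)

schematic_goal dgen_Suc0: "dgen 1 1 0 a b (Suc 0) = ?X" by (simp add: dgs)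
lemmas evs' = evs dgen_Suc0

lemmas lin = del_add del_diff del_smult del_zero dbar_add dbar_diff dbar_smult dbar_zero del_basis dbar_basis

schematic_goal "\<forall>S\<in>set L03. dbar 1 1 0 a b beta S = ?X S" by (simp add: lin Ldefs evs' beta_form)
lemma zero_check': "bideg p q f \<Longrightarrow> completeL L p q \<Longrightarrow> map f L = map (\<lambda>_. 0) L \<Longrightarrow> f = 0"
  by (rule zero_check) (auto simp: map_eq_conv)
lemma dbar_alpha: "dbar 1 1 0 a b alpha = 0"
proof (rule zero_check'[OF _ complete_L03])
  show "bideg 0 3 (dbar 1 1 0 a b alpha)" using bideg_dbar[OF bideg_alpha] by simp
qed (simp add: lin Ldefs evs' alpha_form)

lemma dbar_beta: "dbar 1 1 0 a b beta = 0"
proof (rule zero_check'[OF _ complete_L03])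
  show "bideg 0 3 (dbar 1 1 0 a b beta)" using bideg_dbar[OF bideg_beta] by simp
qed (simp add: lin Ldefs evs' beta_form)

definition y1a :: form where "y1a = basis {3,5}"
definition y1b :: "real \<Rightarrow> form" where "y1b a = basis {0,6} + smult (\<i>/2) (basis {1,5}) + smult (\<i>/2) (basis {2,7})
   + smult \<i> (basis {3,6}) + smult (3/2 * \<i> * of_real a) (basis {0,5})"

lemma bideg_y1a: "bideg 1 1 y1a"
  unfolding y1a_def by (intro bideg_basis) (simp_all add: gens_def pdeg_def qdeg_def)
lemma bideg_y1b: "bideg 1 1 (y1b a)"
  unfolding y1b_def by (intro bideg_add bideg_smult bideg_basis) (simp_all add: gens_def pdeg_def qdeg_def)

lemma ext_alpha: "del 1 1 0 a b alpha + dbar 1 1 0 a b y1a = 0"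
proof (rule zero_check'[OF _ complete_L12])
  have h1: "bideg 1 2 (del 1 1 0 a b alpha)" using bideg_del[OF bideg_alpha] by simp
  have h2: "bideg 1 2 (dbar 1 1 0 a b y1a)" using bideg_dbar[OF bideg_y1a] by simp
  show "bideg 1 2 (del 1 1 0 a b alpha + dbar 1 1 0 a b y1a)"
    using bideg_add[OF h1 h2] .
qed (simp add: lin Ldefs evs' alpha_form y1a_def)

lemma ext_alpha2: "del 1 1 0 a b y1a = 0"
proof (rule zero_check'[OF _ complete_L21])
  show "bideg 2 1 (del 1 1 0 a b y1a)"
    using bideg_del[OF bideg_y1a] by simp
qed (simp add: lin Ldefs evs' y1a_def)

lemma ext_beta: "del 1 1 0 a b beta + dbar 1 1 0 a b (y1b a) = 0"
proof (rule zero_check'[OF _ complete_L12])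
  have h1: "bideg 1 2 (del 1 1 0 a b beta)" using bideg_del[OF bideg_beta] by simp
  have h2: "bideg 1 2 (dbar 1 1 0 a b (y1b a))" using bideg_dbar[OF bideg_y1b] by simp
  show "bideg 1 2 (del 1 1 0 a b beta + dbar 1 1 0 a b (y1b a))"
    using bideg_add[OF h1 h2] .
qed (simp add: lin Ldefs evs' beta_form y1b_def)

lemma obstruction:
  assumes bx: "bideg 0 2 x" and dx: "dbar 1 1 0 a b x = 0"
    and by1: "bideg 1 1 y1" and by2: "bideg 2 0 y2"
    and e1: "del 1 1 0 a b x + dbar 1 1 0 a b y1 = 0"
    and e2: "del 1 1 0 a b y1 + dbar 1 1 0 a b y2 = 0"
  shows "x {4,6} = 0"
proof -
  have z1: "\<i> * x {4,6} + x {6,7} = 0" using dbar_x(1)[OF bx, of a b] dx by simp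
  have z2: "x {5,6} = 0" using dbar_x(2)[OF bx, of a b] dx by simp
  have q045: "(1) * x {4,6} + (-1 * \<i> * complex_of_real b) * x {4,7} + (1 * complex_of_real a) * x {5,6} + (-1) * y1 {6,0} + (-1) * y1 {4,2} + (1 * complex_of_real a) * y1 {5,2} + (-1 * \<i> * complex_of_real b) * y1 {4,3} = 0"
  proof -
    have "(1) * x {4,6} + (-1 * \<i> * complex_of_real b) * x {4,7} + (1 * complex_of_real a) * x {5,6} + (-1) * y1 {6,0} + (-1) * y1 {4,2} + (1 * complex_of_real a) * y1 {5,2} + (-1 * \<i> * complex_of_real b) * y1 {4,3} = (del 1 1 0 a b x + dbar 1 1 0 a b y1) {0,4,5}"
      by (simp add: exp02[OF bx] exp11[OF by1] Ldefs evs'; simp add: algebra_simps)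
    also have "\<dots> = 0" using e1 by simp
    finally show ?thesis .
  qed
  have q046: "(-1 * \<i>) * x {4,7} + (1 * complex_of_real a) * y1 {6,2} + (-1 * \<i>) * y1 {4,3} = 0"
  proof -
    have "(-1 * \<i>) * x {4,7} + (1 * complex_of_real a) * y1 {6,2} + (-1 * \<i>) * y1 {4,3} = (del 1 1 0 a b x + dbar 1 1 0 a b y1) {0,4,6}"
      by (simp add: exp02[OF bx] exp11[OF by1] Ldefs evs'; simp add: algebra_simps)
    also have "\<dots> = 0" using e1 by simp
    finally show ?thesis .
  qed
  have q056: "(-1 * \<i>) * x {5,7} + (\<i> * complex_of_real b) * x {6,7} + (1) * y1 {6,2} + (-1 * \<i>) * y1 {5,3} + (\<i> * complex_of_real b) * y1 {6,3} = 0"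
  proof -
    have "(-1 * \<i>) * x {5,7} + (\<i> * complex_of_real b) * x {6,7} + (1) * y1 {6,2} + (-1 * \<i>) * y1 {5,3} + (\<i> * complex_of_real b) * y1 {6,3} = (del 1 1 0 a b x + dbar 1 1 0 a b y1) {0,5,6}"
      by (simp add: exp02[OF bx] exp11[OF by1] Ldefs evs'; simp add: algebra_simps)
    also have "\<dots> = 0" using e1 by simp
    finally show ?thesis .
  qed
  have q057: "(1) * x {6,7} + (\<i>) * y1 {6,0} + (-1) * y1 {5,1} + (1) * y1 {7,2} + (\<i> * complex_of_real b) * y1 {7,3} = 0"
  proof -
    have "(1) * x {6,7} + (\<i>) * y1 {6,0} + (-1) * y1 {5,1} + (1) * y1 {7,2} + (\<i> * complex_of_real b) * y1 {7,3} = (del 1 1 0 a b x + dbar 1 1 0 a b y1) {0,5,7}"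
      by (simp add: exp02[OF bx] exp11[OF by1] Ldefs evs'; simp add: algebra_simps)
    also have "\<dots> = 0" using e1 by simp
    finally show ?thesis .
  qed
  have q067: "(-1) * y1 {6,1} + (\<i>) * y1 {7,3} = 0"
  proof -
    have "(-1) * y1 {6,1} + (\<i>) * y1 {7,3} = (del 1 1 0 a b x + dbar 1 1 0 a b y1) {0,6,7}"
      by (simp add: exp02[OF bx] exp11[OF by1] Ldefs evs'; simp add: algebra_simps)
    also have "\<dots> = 0" using e1 by simp
    finally show ?thesis .
  qed
  have q145: "(1) * x {4,7} + (1) * x {5,6} + (-1 * \<i> * complex_of_real b) * x {5,7} + (-1) * y1 {6,1} + (-1) * y1 {5,2} + (1) * y1 {4,3} + (-1 * \<i> * complex_of_real b) * y1 {5,3} = 0"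
  proof -
    have "(1) * x {4,7} + (1) * x {5,6} + (-1 * \<i> * complex_of_real b) * x {5,7} + (-1) * y1 {6,1} + (-1) * y1 {5,2} + (1) * y1 {4,3} + (-1 * \<i> * complex_of_real b) * y1 {5,3} = (del 1 1 0 a b x + dbar 1 1 0 a b y1) {1,4,5}"
      by (simp add: exp02[OF bx] exp11[OF by1] Ldefs evs'; simp add: algebra_simps)
    also have "\<dots> = 0" using e1 by simp
    finally show ?thesis .
  qed
  have q146: "(-1 * \<i> * complex_of_real b) * x {6,7} + (-1) * y1 {6,2} + (-1 * \<i> * complex_of_real b) * y1 {6,3} = 0"
  proof -
    have "(-1 * \<i> * complex_of_real b) * x {6,7} + (-1) * y1 {6,2} + (-1 * \<i> * complex_of_real b) * y1 {6,3} = (del 1 1 0 a b x + dbar 1 1 0 a b y1) {1,4,6}"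
      by (simp add: exp02[OF bx] exp11[OF by1] Ldefs evs'; simp add: algebra_simps)
    also have "\<dots> = 0" using e1 by simp
    finally show ?thesis .
  qed
  have q147: "(-1) * x {6,7} + (-1) * y1 {5,1} + (-1 * \<i>) * y1 {4,2} + (-1) * y1 {7,2} + (-1 * \<i> * complex_of_real b) * y1 {7,3} = 0"
  proof -
    have "(-1) * x {6,7} + (-1) * y1 {5,1} + (-1 * \<i>) * y1 {4,2} + (-1) * y1 {7,2} + (-1 * \<i> * complex_of_real b) * y1 {7,3} = (del 1 1 0 a b x + dbar 1 1 0 a b y1) {1,4,7}"
      by (simp add: exp02[OF bx] exp11[OF by1] Ldefs evs'; simp add: algebra_simps)
    also have "\<dots> = 0" using e1 by simp
    finally show ?thesis .
  qed
  have q157: "(\<i>) * y1 {6,1} + (-1 * \<i>) * y1 {5,2} + (-1) * y1 {7,3} = 0"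
  proof -
    have "(\<i>) * y1 {6,1} + (-1 * \<i>) * y1 {5,2} + (-1) * y1 {7,3} = (del 1 1 0 a b x + dbar 1 1 0 a b y1) {1,5,7}"
      by (simp add: exp02[OF bx] exp11[OF by1] Ldefs evs'; simp add: algebra_simps)
    also have "\<dots> = 0" using e1 by simp
    finally show ?thesis .
  qed
  have q247: "(-1) * y1 {5,2} + (-1 * \<i>) * y1 {7,3} = 0"
  proof -
    have "(-1) * y1 {5,2} + (-1 * \<i>) * y1 {7,3} = (del 1 1 0 a b x + dbar 1 1 0 a b y1) {2,4,7}"
      by (simp add: exp02[OF bx] exp11[OF by1] Ldefs evs'; simp add: algebra_simps)
    also have "\<dots> = 0" using e1 by simp
    finally show ?thesis .
  qed
  have q014: "(1) * y1 {6,0} + (-1 * \<i> * complex_of_real b) * y1 {7,0} + (-1 * complex_of_real a) * y1 {6,1} + (1) * y1 {4,2} + (1) * y2 {0,2} + (\<i> * complex_of_real b) * y2 {0,3} + (1 * complex_of_real a) * y2 {1,2} = 0"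
  proof -
    have "(1) * y1 {6,0} + (-1 * \<i> * complex_of_real b) * y1 {7,0} + (-1 * complex_of_real a) * y1 {6,1} + (1) * y1 {4,2} + (1) * y2 {0,2} + (\<i> * complex_of_real b) * y2 {0,3} + (1 * complex_of_real a) * y2 {1,2} = (del 1 1 0 a b y1 + dbar 1 1 0 a b y2) {0,1,4}"
      by (simp add: exp11[OF by1] exp20[OF by2] Ldefs evs'; simp add: algebra_simps)
    also have "\<dots> = 0" using e2 by simp
    finally show ?thesis .
  qed
  have q017: "(1) * y1 {7,2} + (-1 * \<i>) * y2 {0,2} = 0"
  proof -
    have "(1) * y1 {7,2} + (-1 * \<i>) * y2 {0,2} = (del 1 1 0 a b y1 + dbar 1 1 0 a b y2) {0,1,7}"
      by (simp add: exp11[OF by1] exp20[OF by2] Ldefs evs'; simp add: algebra_simps)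
    also have "\<dots> = 0" using e2 by simp
    finally show ?thesis .
  qed
  have q024: "(-1 * \<i>) * y1 {7,0} + (-1 * complex_of_real a) * y1 {6,2} + (\<i>) * y2 {0,3} = 0"
  proof -
    have "(-1 * \<i>) * y1 {7,0} + (-1 * complex_of_real a) * y1 {6,2} + (\<i>) * y2 {0,3} = (del 1 1 0 a b y1 + dbar 1 1 0 a b y2) {0,2,4}"
      by (simp add: exp11[OF by1] exp20[OF by2] Ldefs evs'; simp add: algebra_simps)
    also have "\<dots> = 0" using e2 by simp
    finally show ?thesis .
  qed
  have q027: "(-1) * y2 {1,2} = 0"
  proof -
    have "(-1) * y2 {1,2} = (del 1 1 0 a b y1 + dbar 1 1 0 a b y2) {0,2,7}"
      by (simp add: exp11[OF by1] exp20[OF by2] Ldefs evs'; simp add: algebra_simps)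
    also have "\<dots> = 0" using e2 by simp
    finally show ?thesis .
  qed
  have comb: "x {4,6} + 2 * \<i> * x {6,7} + (complex_of_real a - \<i> * complex_of_real b) * x {5,6} =
     (1) * ((1) * x {4,6} + (-1 * \<i> * complex_of_real b) * x {4,7} + (1 * complex_of_real a) * x {5,6} + (-1) * y1 {6,0} + (-1) * y1 {4,2} + (1 * complex_of_real a) * y1 {5,2} + (-1 * \<i> * complex_of_real b) * y1 {4,3})
   + (\<i>) * ((1) * x {6,7} + (\<i>) * y1 {6,0} + (-1) * y1 {5,1} + (1) * y1 {7,2} + (\<i> * complex_of_real b) * y1 {7,3})
   + (- \<i>) * ((-1) * x {6,7} + (-1) * y1 {5,1} + (-1 * \<i>) * y1 {4,2} + (-1) * y1 {7,2} + (-1 * \<i> * complex_of_real b) * y1 {7,3})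
   + (2) * ((1) * y1 {6,0} + (-1 * \<i> * complex_of_real b) * y1 {7,0} + (-1 * complex_of_real a) * y1 {6,1} + (1) * y1 {4,2} + (1) * y2 {0,2} + (\<i> * complex_of_real b) * y2 {0,3} + (1 * complex_of_real a) * y2 {1,2})
   + (- 2 * \<i>) * ((1) * y1 {7,2} + (-1 * \<i>) * y2 {0,2})
   + (- 2 * complex_of_real b) * ((-1 * \<i>) * x {4,7} + (1 * complex_of_real a) * y1 {6,2} + (-1 * \<i>) * y1 {4,3})
   + (\<i> / 3 * complex_of_real b - complex_of_real a) * ((-1) * y1 {6,1} + (\<i>) * y1 {7,3})
   + (- \<i> * complex_of_real b) * ((1) * x {4,7} + (1) * x {5,6} + (-1 * \<i> * complex_of_real b) * x {5,7} + (-1) * y1 {6,1} + (-1) * y1 {5,2} + (1) * y1 {4,3} + (-1 * \<i> * complex_of_real b) * y1 {5,3})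
   + (- 2 / 3 * complex_of_real b - \<i> * complex_of_real a) * ((\<i>) * y1 {6,1} + (-1 * \<i>) * y1 {5,2} + (-1) * y1 {7,3})
   + (5 * \<i> / 3 * complex_of_real b) * ((-1) * y1 {5,2} + (-1 * \<i>) * y1 {7,3})
   + (- 2 * complex_of_real b) * ((-1 * \<i>) * y1 {7,0} + (-1 * complex_of_real a) * y1 {6,2} + (\<i>) * y2 {0,3})
   + (\<i> * complex_of_real b * complex_of_real b) * ((-1 * \<i>) * x {5,7} + (\<i> * complex_of_real b) * x {6,7} + (1) * y1 {6,2} + (-1 * \<i>) * y1 {5,3} + (\<i> * complex_of_real b) * y1 {6,3})
   + (\<i> * complex_of_real b * complex_of_real b) * ((-1 * \<i> * complex_of_real b) * x {6,7} + (-1) * y1 {6,2} + (-1 * \<i> * complex_of_real b) * y1 {6,3})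
   + (2 * complex_of_real a) * ((-1) * y2 {1,2})"
    by (simp add: algebra_simps)
  also have "\<dots> = 0" by (simp only: q045 q057 q147 q014 q017 q046 q067 q145 q157 q247 q024 q056 q146 q027) simp
  finally have c: "x {4,6} + 2 * \<i> * x {6,7} + (complex_of_real a - \<i> * complex_of_real b) * x {5,6} = 0" .
  have "x {6,7} = - (\<i> * x {4,6})" using z1 by (metis add_eq_0_iff)
  then have "3 * x {4,6} = 0" using c z2 by (simp add: algebra_simps)
  then show ?thesis by simp
qed




lemma Z1_iff: "x \<in> Zr dl db 1 p q \<longleftrightarrow> bideg p q x \<and> db x = 0"
  unfolding Zr_def by auto

lemma Zr_mono:
  assumes rr: "r \<le> r'" and x: "x \<in> Zr dl db r' p q"
  shows "x \<in> Zr dl db r p q"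
proof -
  obtain y where "bideg p q x" "db x = 0" "y 0 = x"
    and yi: "\<forall>i\<in>{1..<r'}. bideg (p + int i) (q - int i) (y i) \<and> dl (y (i - 1)) + db (y i) = 0"
    using x unfolding Zr_def by blast
  moreover have "\<forall>i\<in>{1..<r}. bideg (p + int i) (q - int i) (y i) \<and> dl (y (i - 1)) + db (y i) = 0"
    using yi rr by auto
  ultimately show ?thesis unfolding Zr_def by blast
qed

lemma Z_elim:
  assumes "x \<in> Zr dl db r 0 2" "3 \<le> r"
  shows "\<exists>y1 y2. bideg 1 1 y1 \<and> bideg 2 0 y2 \<and> dl x + db y1 = 0 \<and> dl y1 + db y2 = 0"
proof -
  obtain y where y0: "y 0 = x" and yi: "\<forall>i\<in>{1..<r}. bideg (0 + int i) (2 - int i) (y i) \<and> dl (y (i - 1)) + db (y i) = 0"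
    using assms(1) unfolding Zr_def by blast
  have "1 \<in> {1..<r}" "2 \<in> {1..<r}" using assms(2) by auto
  then have "bideg (0 + int 1) (2 - int 1) (y 1) \<and> dl (y (1 - 1)) + db (y 1) = 0"
      "bideg (0 + int 2) (2 - int 2) (y 2) \<and> dl (y (2 - 1)) + db (y 2) = 0"
    using yi by blast+
  then show ?thesis using y0 by (intro exI[of _ "y 1"] exI[of _ "y 2"]) simp
qed

lemma B_iff:
  assumes r: "1 \<le> r"
  shows "x \<in> Br (del 1 1 0 a b) (dbar 1 1 0 a b) r 0 2 \<longleftrightarrow> (\<exists>z. bideg 0 1 z \<and> x = dbar 1 1 0 a b z)"
proof
  assume "x \<in> Br (del 1 1 0 a b) (dbar 1 1 0 a b) r 0 2"
  then obtain y where y0: "bideg 0 (2 - 1) (y 0)"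
    and yi: "\<forall>i\<in>{1..<r}. bideg (0 - int i) (2 + int i - 1) (y i)"
    and yr: "\<forall>i\<ge>r. y i = 0" and x: "x = dbar 1 1 0 a b (y 0) + del 1 1 0 a b (y 1)"
    unfolding Br_def by blast
  have "y 1 = 0"
  proof (cases "r = 1")
    case True then show ?thesis using yr by simp
  next
    case False
    then have "1 \<in> {1..<r}" using r by auto
    then have "bideg (0 - int 1) (2 + int 1 - 1) (y 1)" using yi by blast
    then show ?thesis by (rule bideg_negp[rotated]) simp
  qed
  then show "\<exists>z. bideg 0 1 z \<and> x = dbar 1 1 0 a b z" using y0 x by (auto simp: del_zero)
next
  assume "\<exists>z. bideg 0 1 z \<and> x = dbar 1 1 0 a b z"
  then obtain z where z: "bideg 0 1 z" and x: "x = dbar 1 1 0 a b z" by blast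
  define y :: "nat \<Rightarrow> form" where "y = (\<lambda>i. if i = 0 then z else 0)"
  have bx: "bideg 0 2 x" using bideg_dbar[OF z] x by simp
  show "x \<in> Br (del 1 1 0 a b) (dbar 1 1 0 a b) r 0 2"
    unfolding Br_def
  proof (intro CollectI conjI exI[of _ y])
    show "bideg 0 2 x" by (rule bx)
    show "bideg 0 (2 - 1) (y 0)" using z by (simp add: y_def)
    show "\<forall>i\<in>{1..<r}. bideg (0 - int i) (2 + int i - 1) (y i)" by (simp add: y_def)
    show "\<forall>i\<ge>r. y i = 0" using r by (simp add: y_def)
    show "x = dbar 1 1 0 a b (y 0) + del 1 1 0 a b (y 1)" using x by (simp add: y_def del_zero)
    show "\<forall>i\<in>{1..<r}. dbar 1 1 0 a b (y i) + del 1 1 0 a b (y (i + 1)) = 0"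
      by (simp add: y_def del_zero dbar_zero)
  qed
qed

lemma alpha_Z: "alpha \<in> Zr (del 1 1 0 a b) (dbar 1 1 0 a b) r 0 2"
proof -
  define y :: "nat \<Rightarrow> form" where "y = (\<lambda>i. if i = 0 then alpha else if i = 1 then y1a else 0)"
  have "\<forall>i\<in>{1..<r}. bideg (0 + int i) (2 - int i) (y i) \<and> del 1 1 0 a b (y (i - 1)) + dbar 1 1 0 a b (y i) = 0"
  proof
    fix i assume "i \<in> {1..<r}"
    then have "i = 1 \<or> i = 2 \<or> i \<ge> 3" by auto
    then show "bideg (0 + int i) (2 - int i) (y i) \<and> del 1 1 0 a b (y (i - 1)) + dbar 1 1 0 a b (y i) = 0"
    proof (elim disjE)
      assume "i = 1" then show ?thesis using bideg_y1a ext_alpha by (simp add: y_def)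
    next
      assume "i = 2" then show ?thesis using ext_alpha2 by (simp add: y_def dbar_zero)
    next
      assume "i \<ge> 3" then have "i \<noteq> 0" "i \<noteq> 1" "i - 1 \<noteq> 0" "i - 1 \<noteq> 1" by auto
      then show ?thesis by (simp add: y_def dbar_zero del_zero)
    qed
  qed
  then show ?thesis unfolding Zr_def using bideg_alpha dbar_alpha
    by (intro CollectI conjI exI[of _ y]) (auto simp: y_def)
qed

lemma beta_Z2: "beta \<in> Zr (del 1 1 0 a b) (dbar 1 1 0 a b) 2 0 2"
proof -
  define y :: "nat \<Rightarrow> form" where "y = (\<lambda>i. if i = 0 then beta else y1b a)"
  have "\<forall>i\<in>{1..<2}. bideg (0 + int i) (2 - int i) (y i) \<and> del 1 1 0 a b (y (i - 1)) + dbar 1 1 0 a b (y i) = 0"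
  proof -
    have "{1..<2::nat} = {1}" by auto
    then show ?thesis using bideg_y1b ext_beta by (simp add: y_def)
  qed
  then show ?thesis unfolding Zr_def using bideg_beta dbar_beta
    by (intro CollectI conjI exI[of _ y]) (auto simp: y_def)
qed

lemma lincomb2: "lincomb [c1, c2] [v1, v2] = smult c1 v1 + smult c2 v2"
  by (simp add: lincomb_def numeral_2_eq_2)
lemma lincomb1: "lincomb [c1] [v1] = smult c1 v1"
  by (simp add: lincomb_def)

lemma indep:
  assumes z: "bideg 0 1 z" and e: "smult c1 alpha + smult c2 beta = dbar 1 1 0 a b z"
  shows "c1 = 0 \<and> c2 = 0"
proof -
  have e46: "c2 = 0" using fun_cong[OF e, of "{4,6}"] dbar_z(2)[OF z, of a b]
    by (simp add: alpha_form beta_form basis_eval)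
  have e45: "c1 * \<i> = z {6}" using fun_cong[OF e, of "{4,5}"] dbar_z(1)[OF z, of a b] e46
    by (simp add: alpha_form beta_form basis_eval)
  have e57: "- c1 = - \<i> * z {6}" using fun_cong[OF e, of "{5,7}"] dbar_z(5)[OF z, of a b] e46
    by (simp add: alpha_form beta_form basis_eval)
  have "c1 = \<i> * z {6}" using e57 by simp
  also have "\<dots> = \<i> * (c1 * \<i>)" using e45 by simp
  also have "\<dots> = - c1" by (simp add: algebra_simps)
  finally have "c1 = 0" by simp
  then show ?thesis using e46 by simp
qed


lemma smult_zero_left: "smult 0 f = 0" by (rule ext) simp

lemma span1:
  assumes bx: "bideg 0 2 x" and dx: "dbar 1 1 0 a b x = 0"
  defines "c1 \<equiv> - (x {5,7} + \<i> * x {4,5}) / 2"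
  defines "z \<equiv> smult (x {4,7}) (basis {5}) + smult (x {4,5} - \<i> * c1) (basis {6})"
  shows "bideg 0 1 z \<and> x - (smult c1 alpha + smult (x {4,6}) beta) = dbar 1 1 0 a b z"
proof -
  have z1: "x {6,7} = - (\<i> * x {4,6})" using dbar_x(1)[OF bx, of a b] dx by (simp add: add_eq_0_iff)
  have z2: "x {5,6} = 0" using dbar_x(2)[OF bx, of a b] dx by simp
  have bz: "bideg 0 1 z" unfolding z_def
    by (intro bideg_add bideg_smult bideg_basis) (simp_all add: gens_def pdeg_def qdeg_def)
  have b1: "bideg 0 2 (x - (smult c1 alpha + smult (x {4,6}) beta))"
    by (intro bideg_diff bideg_add bideg_smult bx bideg_alpha bideg_beta)
  have b2: "bideg 0 2 (dbar 1 1 0 a b z)" using bideg_dbar[OF bz] by simp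
  have "x - (smult c1 alpha + smult (x {4,6}) beta) - dbar 1 1 0 a b z = 0"
  proof (rule zero_check'[OF bideg_diff[OF b1 b2] complete_L02])
    show "map (x - (smult c1 alpha + smult (x {4,6}) beta) - dbar 1 1 0 a b z) L02 = map (\<lambda>_. 0) L02"
      by (simp add: Ldefs lin evs' alpha_form beta_form z_def z1 z2; simp add: c1_def field_simps)
  qed
  then show ?thesis using bz by simp
qed

theorem proposition2p5:
  fixes a b :: real
  defines "\<alpha> \<equiv> smult \<i> (wedge (wb 1) (wb 2)) - wedge (wb 2) (wb 4)"
      and "\<beta> \<equiv> wedge (wb 1) (wb 3) - smult \<i> (wedge (wb 3) (wb 4))"
  shows "\<forall>r\<in>{1, 2}. classes_basis (Z_page 1 1 0 a b r 0 2) (B_page 1 1 0 a b r 0 2) [\<alpha>, \<beta>]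
       \<and> (\<forall>r\<ge>3. classes_basis (Z_page 1 1 0 a b r 0 2) (B_page 1 1 0 a b r 0 2) [\<alpha>])"
proof -
  have ea: "\<alpha> = alpha" unfolding \<alpha>_def alpha_def ..
  have eb: "\<beta> = beta" unfolding \<beta>_def beta_def ..
  let ?Z = "\<lambda>r. Zr (del 1 1 0 a b) (dbar 1 1 0 a b) r 0 2"
  let ?B = "\<lambda>r. Br (del 1 1 0 a b) (dbar 1 1 0 a b) r 0 2"
  have Z1: "x \<in> ?Z 1 \<Longrightarrow> bideg 0 2 x \<and> dbar 1 1 0 a b x = 0" for x
    using Z1_iff by blast
  have cb12: "classes_basis (?Z r) (?B r) [alpha, beta]" if r: "r \<in> {1, 2}" for r
    unfolding classes_basis_def
  proof (intro conjI allI impI ballI)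
    have "beta \<in> ?Z r"
    proof (cases "r = 2")
      case True then show ?thesis using beta_Z2 by simp
    next
      case False then have "r = 1" using r by simp
      then show ?thesis using Zr_mono[OF _ beta_Z2, of 1] by simp
    qed
    then show "set [alpha, beta] \<subseteq> ?Z r" using alpha_Z by simp
  next
    fix cs :: "complex list" and c
    assume l: "length cs = length [alpha, beta]" and inB: "lincomb cs [alpha, beta] \<in> ?B r" and c: "c \<in> set cs"
    from l obtain c1 c2 where cs: "cs = [c1, c2]"
      by (auto simp: length_Suc_conv numeral_2_eq_2)
    have "r \<ge> 1" using r by auto
    then obtain z where z: "bideg 0 1 z" and ez: "smult c1 alpha + smult c2 beta = dbar 1 1 0 a b z"
      using inB B_iff[OF \<open>r \<ge> 1\<close>] by (auto simp: cs lincomb2)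
    show "c = 0" using indep[OF z ez] c cs by auto
  next
    fix x assume "x \<in> ?Z r"
    then have "x \<in> ?Z 1" using Zr_mono[of 1 r] r by auto
    then have bx: "bideg 0 2 x" and dx: "dbar 1 1 0 a b x = 0" using Z1 by auto
    obtain c1 z where z: "bideg 0 1 z" and ez: "x - (smult c1 alpha + smult (x {4,6}) beta) = dbar 1 1 0 a b z"
      using span1[OF bx dx] by blast
    have "r \<ge> 1" using r by auto
    then have "x - lincomb [c1, x {4,6}] [alpha, beta] \<in> ?B r"
      using B_iff[OF \<open>r \<ge> 1\<close>] z ez by (auto simp: lincomb2)
    then show "\<exists>cs. length cs = length [alpha, beta] \<and> x - lincomb cs [alpha, beta] \<in> ?B r"
      by (intro exI[of _ "[c1, x {4,6}]"]) simp
  qed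
  have cb3: "classes_basis (?Z r) (?B r) [alpha]" if r: "r \<ge> 3" for r
    unfolding classes_basis_def
  proof (intro conjI allI impI ballI)
    show "set [alpha] \<subseteq> ?Z r" using alpha_Z by simp
  next
    fix cs :: "complex list" and c
    assume l: "length cs = length [alpha]" and inB: "lincomb cs [alpha] \<in> ?B r" and c: "c \<in> set cs"
    from l obtain c1 where cs: "cs = [c1]"
      by (auto simp: length_Suc_conv)
    have "r \<ge> 1" using r by auto
    then obtain z where z: "bideg 0 1 z" and ez: "smult c1 alpha = dbar 1 1 0 a b z"
      using inB B_iff[OF \<open>r \<ge> 1\<close>] by (auto simp: cs lincomb1)
    then have ez': "smult c1 alpha + smult 0 beta = dbar 1 1 0 a b z" by (simp add: smult_zero_left)
    show "c = 0" using indep[OF z ez'] c cs by auto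
  next
    fix x assume xZ: "x \<in> ?Z r"
    then have "x \<in> ?Z 1" using Zr_mono[of 1 r] r by auto
    then have bx: "bideg 0 2 x" and dx: "dbar 1 1 0 a b x = 0" using Z1 by auto
    have "x \<in> ?Z 3" using Zr_mono[of 3 r] r xZ by auto
    then obtain y1 y2 where "bideg 1 1 y1" "bideg 2 0 y2" "del 1 1 0 a b x + dbar 1 1 0 a b y1 = 0"
        "del 1 1 0 a b y1 + dbar 1 1 0 a b y2 = 0"
      using Z_elim[of x _ _ 3] by blast
    then have x46: "x {4,6} = 0" using obstruction[OF bx dx] by blast
    obtain c1 z where z: "bideg 0 1 z" and ez: "x - (smult c1 alpha + smult (x {4,6}) beta) = dbar 1 1 0 a b z"
      using span1[OF bx dx] by blast
    have "r \<ge> 1" using r by auto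
    then have "x - lincomb [c1] [alpha] \<in> ?B r"
      using B_iff[OF \<open>r \<ge> 1\<close>] z ez x46 by (auto simp: lincomb1 smult_zero_left)
    then show "\<exists>cs. length cs = length [alpha] \<and> x - lincomb cs [alpha] \<in> ?B r"
      by (intro exI[of _ "[c1]"]) simp
  qed
  show ?thesis unfolding ea eb Z_page_def B_page_def using cb12 cb3 by blast
qed


end
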